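(* Let $f:\mathbb{C}^2\to M_2(\mathbb{C})$ be the unital C*-algebra embedding $f(a,b)=\begin{pmatrix}a&0\\0&b\end{pmatrix}$, and let $\sigma:\mathrm{Max}\,\mathbb{C}^2\to\mathcal{T}(\mathbb{C}^2)$ be the quotient map $M\mapsto 1\cdot M\cdot 1$ (sending a closed subspace to the closed two-sided ideal it generates). Then the pushout of $\mathrm{Max}\,f:\mathrm{Max}\,\mathbb{C}^2\to\mathrm{Max}\,M_2(\mathbb{C})$ and $\sigma$ in the category of quantales and quantale homomorphisms is the trivial quantale.
   Context: A quantale is a complete lattice with an associative multiplication $\cdot$ distributing over arbitrary joins in both variables; a quantale homomorphism preserves arbitrary joins and multiplication; a quantale is trivial if its bottom equals its top. For a unital C*-algebra $A$, $\mathrm{Max}\,A$ is the quantale of closed linear subspaces of $A$ with join the closure of the sum and product $M\cdot N$ the closure of the linear span of $\{ab:a\in M,b\in N\}$; its top $1$ is $A$. For a unital *-homomorphism $f:A\to B$, $\mathrm{Max}\,f(M)=\overline{f[M]}$. $\mathcal{T}(\mathbb{C}^2)$ is the locale of closed ideals of $\mathbb{C}^2$. *)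

theory Defs
  imports "HOL-Analysis.Analysis"
begin

record 'a quantale =
  carrier_q :: "'a set"
  le_q :: "'a \<Rightarrow> 'a \<Rightarrow> bool"
  mult_q :: "'a \<Rightarrow> 'a \<Rightarrow> 'a"

definition is_lub_q :: "'a quantale \<Rightarrow> 'a set \<Rightarrow> 'a \<Rightarrow> bool" where
  "is_lub_q Q S x \<longleftrightarrow> x \<in> carrier_q Q \<and> (\<forall>y\<in>S. le_q Q y x) \<and>
     (\<forall>z\<in>carrier_q Q. (\<forall>y\<in>S. le_q Q y z) \<longrightarrow> le_q Q x z)"

definition join_q :: "'a quantale \<Rightarrow> 'a set \<Rightarrow> 'a" where
  "join_q Q S = (THE x. is_lub_q Q S x)"

definition is_quantale :: "'a quantale \<Rightarrow> bool" where
  "is_quantale Q \<longleftrightarrow>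
     (\<forall>x\<in>carrier_q Q. le_q Q x x) \<and>
     (\<forall>x\<in>carrier_q Q. \<forall>y\<in>carrier_q Q. le_q Q x y \<and> le_q Q y x \<longrightarrow> x = y) \<and>
     (\<forall>x\<in>carrier_q Q. \<forall>y\<in>carrier_q Q. \<forall>z\<in>carrier_q Q.
         le_q Q x y \<and> le_q Q y z \<longrightarrow> le_q Q x z) \<and>
     (\<forall>S. S \<subseteq> carrier_q Q \<longrightarrow> (\<exists>x. is_lub_q Q S x)) \<and>
     (\<forall>x\<in>carrier_q Q. \<forall>y\<in>carrier_q Q. mult_q Q x y \<in> carrier_q Q) \<and>
     (\<forall>x\<in>carrier_q Q. \<forall>y\<in>carrier_q Q. \<forall>z\<in>carrier_q Q.
         mult_q Q (mult_q Q x y) z = mult_q Q x (mult_q Q y z)) \<and>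
     (\<forall>a\<in>carrier_q Q. \<forall>S. S \<subseteq> carrier_q Q \<longrightarrow>
         mult_q Q a (join_q Q S) = join_q Q ((\<lambda>s. mult_q Q a s) ` S) \<and>
         mult_q Q (join_q Q S) a = join_q Q ((\<lambda>s. mult_q Q s a) ` S))"

definition quantale_hom :: "'a quantale \<Rightarrow> 'b quantale \<Rightarrow> ('a \<Rightarrow> 'b) \<Rightarrow> bool" where
  "quantale_hom Q R h \<longleftrightarrow>
     h ` carrier_q Q \<subseteq> carrier_q R \<and>
     (\<forall>S. S \<subseteq> carrier_q Q \<longrightarrow> h (join_q Q S) = join_q R (h ` S)) \<and>
     (\<forall>x\<in>carrier_q Q. \<forall>y\<in>carrier_q Q. h (mult_q Q x y) = mult_q R (h x) (h y))"

definition is_trivial_q :: "'a quantale \<Rightarrow> bool" where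
  "is_trivial_q Q \<longleftrightarrow> join_q Q {} = join_q Q (carrier_q Q)"

text \<open>Pushout of \<open>f : A \<rightarrow> B\<close>, \<open>g : A \<rightarrow> C\<close> with cocone \<open>(P, i, j)\<close>, universal property
  tested against all quantales whose elements live in the type \<open>'q\<close>.
  Quantifying the type \<open>'q\<close> schematically at theorem level gives all quantales.\<close>
definition is_pushout_q ::
  "'a quantale \<Rightarrow> 'b quantale \<Rightarrow> 'c quantale \<Rightarrow> ('a \<Rightarrow> 'b) \<Rightarrow> ('a \<Rightarrow> 'c) \<Rightarrow>
   'p quantale \<Rightarrow> ('b \<Rightarrow> 'p) \<Rightarrow> ('c \<Rightarrow> 'p) \<Rightarrow> 'q itself \<Rightarrow> bool" where
  "is_pushout_q A B C f g P i j _ \<longleftrightarrow>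
     is_quantale P \<and> quantale_hom B P i \<and> quantale_hom C P j \<and>
     (\<forall>x\<in>carrier_q A. i (f x) = j (g x)) \<and>
     (\<forall>(Q :: 'q quantale) u v.
        is_quantale Q \<and> quantale_hom B Q u \<and> quantale_hom C Q v \<and>
        (\<forall>x\<in>carrier_q A. u (f x) = v (g x)) \<longrightarrow>
        (\<exists>k. quantale_hom P Q k \<and> (\<forall>y\<in>carrier_q B. k (i y) = u y) \<and>
             (\<forall>z\<in>carrier_q C. k (j z) = v z) \<and>
             (\<forall>k'. quantale_hom P Q k' \<and> (\<forall>y\<in>carrier_q B. k' (i y) = u y) \<and>
                   (\<forall>z\<in>carrier_q C. k' (j z) = v z) \<longrightarrow>
                   (\<forall>p\<in>carrier_q P. k' p = k p))))"

definition csubspace :: "(complex \<Rightarrow> 'a \<Rightarrow> 'a) \<Rightarrow> 'a::ab_group_add set \<Rightarrow> bool" where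
  "csubspace sc M \<longleftrightarrow> 0 \<in> M \<and> (\<forall>x\<in>M. \<forall>y\<in>M. x + y \<in> M) \<and> (\<forall>c x. x \<in> M \<longrightarrow> sc c x \<in> M)"

definition cspan :: "(complex \<Rightarrow> 'a \<Rightarrow> 'a) \<Rightarrow> 'a::ab_group_add set \<Rightarrow> 'a set" where
  "cspan sc X = \<Inter>{M. csubspace sc M \<and> X \<subseteq> M}"

definition Max_prod :: "(complex \<Rightarrow> 'a \<Rightarrow> 'a) \<Rightarrow> ('a \<Rightarrow> 'a \<Rightarrow> 'a) \<Rightarrow>
    'a::{ab_group_add,topological_space} set \<Rightarrow> 'a set \<Rightarrow> 'a set" where
  "Max_prod sc mul M N = closure (cspan sc {mul a b | a b. a \<in> M \<and> b \<in> N})"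

text \<open>\<open>Max A\<close>: closed linear subspaces, ordered by inclusion (so joins are closures of sums).\<close>
definition Max_q :: "(complex \<Rightarrow> 'a \<Rightarrow> 'a) \<Rightarrow> ('a \<Rightarrow> 'a \<Rightarrow> 'a) \<Rightarrow>
    'a::{ab_group_add,topological_space} set quantale" where
  "Max_q sc mul = \<lparr> carrier_q = {M. csubspace sc M \<and> closed M}, le_q = (\<subseteq>),
                    mult_q = Max_prod sc mul \<rparr>"

text \<open>\<open>\<T>(A)\<close>: closed two-sided ideals, with the quotient quantale structure of \<open>Max A\<close>.\<close>
definition T_q :: "(complex \<Rightarrow> 'a \<Rightarrow> 'a) \<Rightarrow> ('a \<Rightarrow> 'a \<Rightarrow> 'a) \<Rightarrow>
    'a::{ab_group_add,topological_space} set quantale" where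
  "T_q sc mul = \<lparr> carrier_q = {I. csubspace sc I \<and> closed I \<and>
                       (\<forall>a x. x \<in> I \<longrightarrow> mul a x \<in> I \<and> mul x a \<in> I)},
                  le_q = (\<subseteq>), mult_q = Max_prod sc mul \<rparr>"

definition sigma_q :: "(complex \<Rightarrow> 'a \<Rightarrow> 'a) \<Rightarrow> ('a \<Rightarrow> 'a \<Rightarrow> 'a) \<Rightarrow>
    'a::{ab_group_add,topological_space} set \<Rightarrow> 'a set" where
  "sigma_q sc mul M = Max_prod sc mul (Max_prod sc mul UNIV M) UNIV"

definition Max_map :: "('a \<Rightarrow> 'b::topological_space) \<Rightarrow> 'a set \<Rightarrow> 'b set" where
  "Max_map f M = closure (f ` M)"

definition C2_scale :: "complex \<Rightarrow> complex^2 \<Rightarrow> complex^2" where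
  "C2_scale c v = (\<chi> i. c * v $ i)"

definition C2_mult :: "complex^2 \<Rightarrow> complex^2 \<Rightarrow> complex^2" where
  "C2_mult v w = (\<chi> i. v $ i * w $ i)"

definition M2_scale :: "complex \<Rightarrow> complex^2^2 \<Rightarrow> complex^2^2" where
  "M2_scale c A = (\<chi> i j. c * A $ i $ j)"

definition M2_mult :: "complex^2^2 \<Rightarrow> complex^2^2 \<Rightarrow> complex^2^2" where
  "M2_mult A B = A ** B"

definition diag_emb :: "complex^2 \<Rightarrow> complex^2^2" where
  "diag_emb v = (\<chi> i j. if i = j then v $ i else 0)"

definition triv_q :: "unit quantale" where
  "triv_q = \<lparr> carrier_q = UNIV, le_q = (\<lambda>_ _. True), mult_q = (\<lambda>_ _. ()) \<rparr>"

end

theory Submission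
  imports Defs
begin


lemma q_antisym:
  assumes "is_quantale Q" "x \<in> carrier_q Q" "y \<in> carrier_q Q" "le_q Q x y" "le_q Q y x"
  shows "x = y"
  using assms(1)[unfolded is_quantale_def, THEN conjunct2, THEN conjunct1] assms(2-5) by blast

lemma q_lub_ex: "is_quantale Q \<Longrightarrow> S \<subseteq> carrier_q Q \<Longrightarrow> \<exists>x. is_lub_q Q S x"
  by (drule conjunct1[OF conjunct2[OF conjunct2[OF conjunct2[OF iffD1[OF is_quantale_def]]]]]) blast

lemma q_dist: "is_quantale Q \<Longrightarrow> a \<in> carrier_q Q \<Longrightarrow> S \<subseteq> carrier_q Q \<Longrightarrow>
         mult_q Q a (join_q Q S) = join_q Q ((\<lambda>s. mult_q Q a s) ` S) \<and>
         mult_q Q (join_q Q S) a = join_q Q ((\<lambda>s. mult_q Q s a) ` S)"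
  by (drule conjunct2[OF conjunct2[OF conjunct2[OF conjunct2[OF conjunct2[OF conjunct2[OF iffD1[OF is_quantale_def]]]]]]]) blast

lemma join_unique:
  assumes "is_quantale Q" "is_lub_q Q S x"
  shows "join_q Q S = x"
proof -
  have "\<And>y. is_lub_q Q S y \<Longrightarrow> y = x"
  proof -
    fix y assume y: "is_lub_q Q S y"
    have "le_q Q x y" "le_q Q y x" "x \<in> carrier_q Q" "y \<in> carrier_q Q"
      using y assms(2) unfolding is_lub_q_def by auto
    then show "y = x" using q_antisym[OF assms(1)] by blast
  qed
  then show ?thesis unfolding join_q_def using assms(2) by (rule the_equality[rotated])
qed

lemma join_is_lub:
  assumes "is_quantale Q" "S \<subseteq> carrier_q Q"
  shows "is_lub_q Q S (join_q Q S)"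
proof -
  obtain x where "is_lub_q Q S x" using q_lub_ex[OF assms] by blast
  then show ?thesis using join_unique[OF assms(1)] by simp
qed

lemma bot_le:
  assumes "is_quantale Q" "x \<in> carrier_q Q"
  shows "le_q Q (join_q Q {}) x"
  using join_is_lub[OF assms(1), of "{}"] assms(2) unfolding is_lub_q_def by simp

lemma bot_in:
  assumes "is_quantale Q"
  shows "join_q Q {} \<in> carrier_q Q"
  using join_is_lub[OF assms(1), of "{}"] unfolding is_lub_q_def by simp

lemma bot_mult:
  assumes "is_quantale Q" "a \<in> carrier_q Q"
  shows "mult_q Q a (join_q Q {}) = join_q Q {}" "mult_q Q (join_q Q {}) a = join_q Q {}"
  using q_dist[OF assms, of "{}"] by simp_all

lemma hom_le:
  assumes "is_quantale Q" "quantale_hom A Q h" "x \<in> carrier_q A" "t \<in> carrier_q A"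
    "join_q A {x, t} = t"
  shows "le_q Q (h x) (h t)"
proof -
  have "h t = join_q Q {h x, h t}" using assms(2,3,4,5) unfolding quantale_hom_def
    by (metis empty_subsetI image_empty image_insert insert_subset)
  moreover have "h x \<in> carrier_q Q" "h t \<in> carrier_q Q" using assms unfolding quantale_hom_def by auto
  ultimately show ?thesis using join_is_lub[OF assms(1), of "{h x, h t}"] unfolding is_lub_q_def by auto
qed

lemma hom_bot_eq:
  assumes "is_quantale Q" "quantale_hom A Q h" "x \<in> carrier_q A" "t \<in> carrier_q A"
    "join_q A {x, t} = t" "h t = join_q Q {}"
  shows "h x = join_q Q {}"
proof -
  have hx: "h x \<in> carrier_q Q" using assms unfolding quantale_hom_def by auto
  have "le_q Q (h x) (join_q Q {})" using hom_le[OF assms(1-5)] assms(6) by simp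
  moreover have "le_q Q (join_q Q {}) (h x)" using bot_le[OF assms(1) hx] .
  ultimately show ?thesis using q_antisym[OF assms(1) hx bot_in[OF assms(1)]] by blast
qed

lemma join_subset:
  assumes "le_q A = (\<subseteq>)" "t \<in> carrier_q A" "\<forall>s\<in>S. s \<subseteq> t"
    "\<forall>z\<in>carrier_q A. (\<forall>s\<in>S. s \<subseteq> z) \<longrightarrow> t \<subseteq> z"
  shows "join_q A S = t"
  unfolding join_q_def
proof (rule the_equality)
  show "is_lub_q A S t" using assms unfolding is_lub_q_def by auto
  fix y assume "is_lub_q A S y" then show "y = t" using assms unfolding is_lub_q_def by auto
qed



lemma cspan_csubspace: "csubspace sc (cspan sc X)"
  unfolding csubspace_def cspan_def
  apply (intro conjI ballI allI impI)
  apply (simp_all add: csubspace_def)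
  done

lemma cspan_superset: "X \<subseteq> cspan sc X"
  unfolding cspan_def by blast

lemma cspan_least: "csubspace sc S \<Longrightarrow> X \<subseteq> S \<Longrightarrow> cspan sc X \<subseteq> S"
  unfolding cspan_def by blast

lemma cspan_mono: "X \<subseteq> Y \<Longrightarrow> cspan sc X \<subseteq> cspan sc Y"
  unfolding cspan_def by blast



lemma MP_sub:
  assumes "csubspace sc S" "closed S" "\<And>a b. a \<in> M \<Longrightarrow> b \<in> N \<Longrightarrow> mul a b \<in> S"
  shows "Max_prod sc mul M N \<subseteq> S"
proof -
  have "{mul a b | a b. a \<in> M \<and> b \<in> N} \<subseteq> S"
    using assms(3) by auto
  then have "cspan sc {mul a b | a b. a \<in> M \<and> b \<in> N} \<subseteq> S"
    by (rule cspan_least[OF assms(1)])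
  then show ?thesis unfolding Max_prod_def using assms(2) by (rule closure_minimal)
qed

lemma MP_in:
  assumes "a \<in> M" "b \<in> N"
  shows "mul a b \<in> Max_prod sc mul M N"
proof -
  have "mul a b \<in> {mul a b | a b. a \<in> M \<and> b \<in> N}" using assms by auto
  then have "mul a b \<in> cspan sc {mul a b | a b. a \<in> M \<and> b \<in> N}"
    using cspan_superset by (rule subsetD[rotated])
  then show ?thesis unfolding Max_prod_def using closure_subset by (rule subsetD[rotated])
qed

lemma MP_mono:
  assumes "M \<subseteq> M'" "N \<subseteq> N'"
  shows "Max_prod sc mul M N \<subseteq> Max_prod sc mul M' N'"
proof -
  have "{mul a b | a b. a \<in> M \<and> b \<in> N} \<subseteq> {mul a b | a b. a \<in> M' \<and> b \<in> N'}"
    using assms by auto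
  then show ?thesis unfolding Max_prod_def by (intro closure_mono cspan_mono)
qed



lemma M2_scale_real: "r *\<^sub>R A = M2_scale (of_real r) A"
  by (simp add: M2_scale_def vec_eq_iff) (simp add: scaleR_conv_of_real)

lemma C2_scale_real: "r *\<^sub>R A = C2_scale (of_real r) A"
  by (simp add: C2_scale_def vec_eq_iff) (simp add: scaleR_conv_of_real)

lemma M2_closed: "csubspace M2_scale S \<Longrightarrow> closed S"
  apply (rule closed_subspace)
  unfolding subspace_def csubspace_def by (simp add: M2_scale_real)

lemma C2_closed: "csubspace C2_scale S \<Longrightarrow> closed S"
  apply (rule closed_subspace)
  unfolding subspace_def csubspace_def by (simp add: C2_scale_real)

lemma M2_MP_carrier: "Max_prod M2_scale M2_mult M N \<in> carrier_q (Max_q M2_scale M2_mult)"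
proof -
  let ?C = "cspan M2_scale {M2_mult a b | a b. a \<in> M \<and> b \<in> N}"
  have cs: "csubspace M2_scale ?C" by (rule cspan_csubspace)
  moreover have cl: "closed ?C" using M2_closed[OF cs] .
  moreover have "closure ?C = ?C" using cl by simp
  ultimately show ?thesis by (simp add: Max_prod_def Max_q_def)
qed

lemma line_csub: "csubspace M2_scale {M2_scale c w | c. True}"
  unfolding csubspace_def
proof (intro conjI ballI allI impI)
  show "0 \<in> {M2_scale c w | c. True}"
    by (rule CollectI, rule exI[of _ 0]) (simp add: M2_scale_def vec_eq_iff)
next
  fix x y assume "x \<in> {M2_scale c w | c. True}" "y \<in> {M2_scale c w | c. True}"
  then obtain a b where "x = M2_scale a w" "y = M2_scale b w" by blast
  then show "x + y \<in> {M2_scale c w | c. True}"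
    by (intro CollectI exI[of _ "a + b"]) (simp add: M2_scale_def vec_eq_iff algebra_simps)
next
  fix d x assume "x \<in> {M2_scale c w | c. True}"
  then obtain a where "x = M2_scale a w" by blast
  then show "M2_scale d x \<in> {M2_scale c w | c. True}"
    by (intro CollectI exI[of _ "d * a"]) (simp add: M2_scale_def vec_eq_iff algebra_simps)
qed

lemma line_csub2: "csubspace C2_scale {C2_scale c w | c. True}"
  unfolding csubspace_def
proof (intro conjI ballI allI impI)
  show "0 \<in> {C2_scale c w | c. True}"
    by (rule CollectI, rule exI[of _ 0]) (simp add: C2_scale_def vec_eq_iff)
next
  fix x y assume "x \<in> {C2_scale c w | c. True}" "y \<in> {C2_scale c w | c. True}"
  then obtain a b where "x = C2_scale a w" "y = C2_scale b w" by blast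
  then show "x + y \<in> {C2_scale c w | c. True}"
    by (intro CollectI exI[of _ "a + b"]) (simp add: C2_scale_def vec_eq_iff algebra_simps)
next
  fix d x assume "x \<in> {C2_scale c w | c. True}"
  then obtain a where "x = C2_scale a w" by blast
  then show "C2_scale d x \<in> {C2_scale c w | c. True}"
    by (intro CollectI exI[of _ "d * a"]) (simp add: C2_scale_def vec_eq_iff algebra_simps)
qed

lemma diag_line: "diag_emb ` {C2_scale c w | c. True} = {M2_scale c (diag_emb w) | c. True}"
proof -
  have e: "diag_emb (C2_scale c w) = M2_scale c (diag_emb w)" for c
    by (simp add: diag_emb_def C2_scale_def M2_scale_def vec_eq_iff)
  show ?thesis
  proof
    show "diag_emb ` {C2_scale c w | c. True} \<subseteq> {M2_scale c (diag_emb w) | c. True}"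
      using e by blast
    show "{M2_scale c (diag_emb w) | c. True} \<subseteq> diag_emb ` {C2_scale c w | c. True}"
    proof
      fix x assume "x \<in> {M2_scale c (diag_emb w) | c. True}"
      then obtain c where "x = M2_scale c (diag_emb w)" by blast
      then have "x = diag_emb (C2_scale c w)" using e by simp
      then show "x \<in> diag_emb ` {C2_scale c w | c. True}" by blast
    qed
  qed
qed

lemma diag_line_map:
  "Max_map diag_emb {C2_scale c w | c. True} = {M2_scale c (diag_emb w) | c. True}"
  unfolding Max_map_def diag_line using M2_closed[OF line_csub] by simp



definition "Yc = {A::complex^2^2. \<forall>i. A$i$1 = A$i$2}"
definition "Zc = {A::complex^2^2. \<forall>j. A$1$j = A$2$j}"
definition "Yn = {A::complex^2^2. \<forall>i. A$i$1 = - A$i$2}"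
definition "D2 = {A::complex^2^2. A$1$2 = 0 \<and> A$2$1 = 0 \<and> A$2$2 = - A$1$1}"
definition "w1 = ((\<chi> i. 1) :: complex^2)"
definition "w2 = ((\<chi> i. if i = 1 then 1 else -1) :: complex^2)"

lemma MP_zero: "0 \<in> Max_prod sc mul M N"
  unfolding Max_prod_def using cspan_csubspace closure_subset unfolding csubspace_def by blast

lemma one_neq_two: "(1::2) \<noteq> 2" by simp

lemma Yc_csub: "csubspace M2_scale Yc"
  unfolding csubspace_def Yc_def by (simp add: M2_scale_def)
lemma Zc_csub: "csubspace M2_scale Zc"
  unfolding csubspace_def Zc_def by (simp add: M2_scale_def)
lemma Yn_csub: "csubspace M2_scale Yn"
  unfolding csubspace_def Yn_def by (simp add: M2_scale_def)
lemma zero_csub: "csubspace M2_scale {0}"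
  unfolding csubspace_def by (simp add: M2_scale_def vec_eq_iff)

lemma mult_w1: "M2_mult a (diag_emb w1) = a"
  by (simp add: M2_mult_def matrix_matrix_mult_def diag_emb_def w1_def vec_eq_iff sum_2 forall_2)

lemma w1_in: "diag_emb w1 \<in> {M2_scale c (diag_emb w1) | c. True}"
  by (rule CollectI, rule exI[of _ 1]) (simp add: M2_scale_def vec_eq_iff)

lemma Yc_sub_CI: "Yc \<subseteq> Max_prod M2_scale M2_mult Yc {M2_scale c (diag_emb w1) | c. True}"
proof
  fix a assume "a \<in> Yc"
  then have "M2_mult a (diag_emb w1) \<in> Max_prod M2_scale M2_mult Yc {M2_scale c (diag_emb w1) | c. True}"
    by (rule MP_in[OF _ w1_in])
  then show "a \<in> Max_prod M2_scale M2_mult Yc {M2_scale c (diag_emb w1) | c. True}"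
    by (simp add: mult_w1)
qed

lemma Yc_CJ: "Max_prod M2_scale M2_mult Yc {M2_scale c (diag_emb w2) | c. True} \<subseteq> Yn"
proof (rule MP_sub[OF Yn_csub M2_closed[OF Yn_csub]])
  fix a b assume "a \<in> Yc" "b \<in> {M2_scale c (diag_emb w2) | c. True}"
  then show "M2_mult a b \<in> Yn"
    by (auto simp: Yc_def Yn_def M2_mult_def matrix_matrix_mult_def diag_emb_def w2_def
        M2_scale_def sum_2 forall_2)
qed

lemma Yn_Zc: "Max_prod M2_scale M2_mult Yn Zc \<subseteq> {0}"
proof (rule MP_sub[OF zero_csub M2_closed[OF zero_csub]])
  fix a b assume "a \<in> Yn" "b \<in> Zc"
  then show "M2_mult a b \<in> {0}"
    by (auto simp: Zc_def Yn_def M2_mult_def matrix_matrix_mult_def vec_eq_iff sum_2 forall_2)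
qed

definition EE :: "2 \<Rightarrow> 2 \<Rightarrow> complex^2^2" where "EE i j = (\<chi> r c. if r = i \<and> c = j then 1 else 0)"
definition RR :: "2 \<Rightarrow> complex^2^2" where "RR i = (\<chi> r c. if r = i then 1 else 0)"
definition KK :: "2 \<Rightarrow> complex^2^2" where "KK j = (\<chi> r c. if c = j then 1/2 else 0)"

lemma EE_prod: "EE i j = M2_mult (RR i) (KK j)"
  by (simp add: EE_def RR_def KK_def M2_mult_def matrix_matrix_mult_def vec_eq_iff sum_2)

lemma RR_in: "RR i \<in> Yc" by (simp add: RR_def Yc_def)
lemma KK_in: "KK j \<in> Zc" by (simp add: KK_def Zc_def)

lemma decomp: "x = M2_scale (x$1$1) (EE 1 1) + M2_scale (x$1$2) (EE 1 2)
   + M2_scale (x$2$1) (EE 2 1) + M2_scale (x$2$2) (EE 2 2)"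
  by (simp add: EE_def M2_scale_def vec_eq_iff forall_2)

lemma Yc_Zc: "UNIV \<subseteq> Max_prod M2_scale M2_mult Yc Zc"
proof
  fix x :: "complex^2^2"
  let ?S = "cspan M2_scale {M2_mult a b | a b. a \<in> Yc \<and> b \<in> Zc}"
  have cs: "csubspace M2_scale ?S" by (rule cspan_csubspace)
  have E: "EE i j \<in> ?S" for i j
  proof -
    have "EE i j \<in> {M2_mult a b | a b. a \<in> Yc \<and> b \<in> Zc}"
      using EE_prod RR_in KK_in by blast
    then show ?thesis using cspan_superset by (rule subsetD[rotated])
  qed
  have sc: "M2_scale c (EE i j) \<in> ?S" for c i j
    using cs E unfolding csubspace_def by blast
  have add: "a \<in> ?S \<Longrightarrow> b \<in> ?S \<Longrightarrow> a + b \<in> ?S" for a b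
    using cs unfolding csubspace_def by blast
  have "x \<in> ?S" by (subst decomp) (intro add sc)
  then show "x \<in> Max_prod M2_scale M2_mult Yc Zc"
    unfolding Max_prod_def using closure_subset by (rule subsetD[rotated])
qed

lemma prod_CI: "Max_prod M2_scale M2_mult
   (Max_prod M2_scale M2_mult Yc {M2_scale c (diag_emb w1) | c. True}) Zc = UNIV"
  using MP_mono[OF Yc_sub_CI order_refl[of Zc], where sc=M2_scale and mul=M2_mult] Yc_Zc by blast

lemma prod_CJ: "Max_prod M2_scale M2_mult
   (Max_prod M2_scale M2_mult Yc {M2_scale c (diag_emb w2) | c. True}) Zc = {0}"
proof
  show "Max_prod M2_scale M2_mult
   (Max_prod M2_scale M2_mult Yc {M2_scale c (diag_emb w2) | c. True}) Zc \<subseteq> {0}"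
    using MP_mono[OF Yc_CJ order_refl[of Zc], where sc=M2_scale and mul=M2_mult] Yn_Zc by blast
  show "{0} \<subseteq> Max_prod M2_scale M2_mult
   (Max_prod M2_scale M2_mult Yc {M2_scale c (diag_emb w2) | c. True}) Zc"
    using MP_zero by blast
qed

lemma sigma_univ:
  assumes "\<forall>i. w $ i * w $ i = 1"
  shows "sigma_q C2_scale C2_mult {C2_scale c w | c. True} = UNIV"
proof -
  have wL: "w \<in> {C2_scale c w | c. True}"
    by (rule CollectI, rule exI[of _ 1]) (simp add: C2_scale_def vec_eq_iff)
  have 1: "x \<in> Max_prod C2_scale C2_mult UNIV {C2_scale c w | c. True}" for x
  proof -
    have "C2_mult (\<chi> i. x$i * w$i) w = x"
      using assms by (simp add: C2_mult_def vec_eq_iff mult.assoc)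
    then show ?thesis using MP_in[OF UNIV_I wL, where mul=C2_mult and sc=C2_scale and a="\<chi> i. x$i * w$i"] by simp
  qed
  have "x \<in> sigma_q C2_scale C2_mult {C2_scale c w | c. True}" for x
  proof -
    have "C2_mult x w1 = x" by (simp add: C2_mult_def w1_def vec_eq_iff)
    then show ?thesis unfolding sigma_q_def using MP_in[OF 1[of x] UNIV_I, where mul=C2_mult and sc=C2_scale and b=w1] by simp
  qed
  then show ?thesis by blast
qed

lemma sigma1: "sigma_q C2_scale C2_mult {C2_scale c w1 | c. True} = UNIV"
  by (rule sigma_univ) (simp add: w1_def)
lemma sigma2: "sigma_q C2_scale C2_mult {C2_scale c w2 | c. True} = UNIV"
  by (rule sigma_univ) (simp add: w2_def)

lemma diag1: "Max_map diag_emb {C2_scale c w1 | c. True} = {M2_scale c (diag_emb w1) | c. True}"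
  by (rule diag_line_map)
lemma diag2: "Max_map diag_emb {C2_scale c w2 | c. True} = {M2_scale c (diag_emb w2) | c. True}"
  by (rule diag_line_map)



lemma q_refl: "is_quantale Q \<Longrightarrow> x \<in> carrier_q Q \<Longrightarrow> le_q Q x x"
  by (drule conjunct1[OF iffD1[OF is_quantale_def]]) blast

lemma join_single: "is_quantale Q \<Longrightarrow> x \<in> carrier_q Q \<Longrightarrow> join_q Q {x} = x"
  by (rule join_unique) (auto simp: is_lub_q_def q_refl)

abbreviation "QB \<equiv> Max_q M2_scale M2_mult"
abbreviation "QA \<equiv> Max_q C2_scale C2_mult"
abbreviation "QC \<equiv> T_q C2_scale C2_mult"

lemma carrB: "X \<in> carrier_q QB \<longleftrightarrow> csubspace M2_scale X \<and> closed X"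
  by (simp add: Max_q_def)
lemma carrB': "csubspace M2_scale X \<Longrightarrow> X \<in> carrier_q QB"
  using M2_closed carrB by blast
lemma carrA': "csubspace C2_scale X \<Longrightarrow> X \<in> carrier_q QA"
  using C2_closed by (simp add: Max_q_def)
lemma leB: "le_q QB = (\<subseteq>)" by (simp add: Max_q_def)
lemma leC: "le_q QC = (\<subseteq>)" by (simp add: T_q_def)
lemma multB: "mult_q QB = Max_prod M2_scale M2_mult" by (simp add: Max_q_def)

lemma univ_csub: "csubspace sc UNIV" by (simp add: csubspace_def)

lemma UNIV_B: "UNIV \<in> carrier_q QB" by (rule carrB'[OF univ_csub])
lemma UNIV_C: "UNIV \<in> carrier_q QC" by (simp add: T_q_def univ_csub)

lemma join_B_empty: "join_q QB {} = {0}"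
  by (rule join_subset[OF leB carrB'[OF zero_csub]]) (auto simp: carrB csubspace_def)

lemma join_B_univ: "X \<in> carrier_q QB \<Longrightarrow> join_q QB {X, UNIV} = UNIV"
  by (rule join_subset[OF leB UNIV_B]) auto

lemma join_C_univ: "X \<in> carrier_q QC \<Longrightarrow> join_q QC {X, UNIV} = UNIV"
  by (rule join_subset[OF leC UNIV_C]) auto

lemma triv_join: "join_q triv_q S = ()" by simp

lemma triv_quantale: "is_quantale triv_q"
proof -
  have "is_lub_q triv_q S ()" for S by (simp add: triv_q_def is_lub_q_def)
  then show ?thesis unfolding is_quantale_def by (auto simp: triv_q_def)
qed

theorem lemma3p7:
  shows "is_trivial_q triv_q \<and>
         is_pushout_q (Max_q C2_scale C2_mult) (Max_q M2_scale M2_mult) (T_q C2_scale C2_mult)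
           (Max_map diag_emb) (sigma_q C2_scale C2_mult)
           triv_q (\<lambda>_. ()) (\<lambda>_. ()) TYPE('q)"
proof -
  have main: "\<exists>k. quantale_hom triv_q Q k \<and> (\<forall>y\<in>carrier_q QB. k (()) = u y) \<and>
             (\<forall>z\<in>carrier_q QC. k (()) = v z) \<and>
             (\<forall>k'. quantale_hom triv_q Q k' \<and> (\<forall>y\<in>carrier_q QB. k' (()) = u y) \<and>
                   (\<forall>z\<in>carrier_q QC. k' (()) = v z) \<longrightarrow>
                   (\<forall>p\<in>carrier_q triv_q. k' p = k p))"
    if Q: "is_quantale Q" and hu: "quantale_hom QB Q u" and hv: "quantale_hom QC Q v"
      and co: "\<forall>x\<in>carrier_q QA. u (Max_map diag_emb x) = v (sigma_q C2_scale C2_mult x)"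
    for Q :: "'q quantale" and u v
  proof -
    define b where "b = join_q Q {}"
    have b_in: "b \<in> carrier_q Q" unfolding b_def by (rule bot_in[OF Q])
    have umult: "\<And>x y. x \<in> carrier_q QB \<Longrightarrow> y \<in> carrier_q QB \<Longrightarrow>
        u (Max_prod M2_scale M2_mult x y) = mult_q Q (u x) (u y)"
      using hu unfolding quantale_hom_def multB by blast
    have ujoin: "u (join_q QB {}) = join_q Q {}"
      using hu[unfolded quantale_hom_def, THEN conjunct2, THEN conjunct1, rule_format, of "{}"] by simp
    have vjoin: "\<And>S. S \<subseteq> carrier_q QC \<Longrightarrow> v (join_q QC S) = join_q Q (v ` S)"
      using hv unfolding quantale_hom_def by blast
    define CI where "CI = {M2_scale c (diag_emb w1) | c. True}"
    define CJ where "CJ = {M2_scale c (diag_emb w2) | c. True}"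
    have CI_in: "CI \<in> carrier_q QB" unfolding CI_def by (rule carrB'[OF line_csub])
    have CJ_in: "CJ \<in> carrier_q QB" unfolding CJ_def by (rule carrB'[OF line_csub])
    have Yc_in: "Yc \<in> carrier_q QB" by (rule carrB'[OF Yc_csub])
    have Zc_in: "Zc \<in> carrier_q QB" by (rule carrB'[OF Zc_csub])
    have uCI: "u CI = v UNIV"
      using co[rule_format, OF carrA'[OF line_csub2[of w1]]] unfolding diag1 sigma1 CI_def .
    have uCJ: "u CJ = v UNIV"
      using co[rule_format, OF carrA'[OF line_csub2[of w2]]] unfolding diag2 sigma2 CJ_def .
    have u0: "u {0} = b" using ujoin join_B_empty b_def by simp
    have "u UNIV = u (Max_prod M2_scale M2_mult (Max_prod M2_scale M2_mult Yc CI) Zc)"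
      using prod_CI unfolding CI_def by simp
    also have "\<dots> = mult_q Q (mult_q Q (u Yc) (u CI)) (u Zc)"
      using umult[OF M2_MP_carrier Zc_in] umult[OF Yc_in CI_in] by simp
    also have "\<dots> = mult_q Q (mult_q Q (u Yc) (u CJ)) (u Zc)" using uCI uCJ by simp
    also have "\<dots> = u (Max_prod M2_scale M2_mult (Max_prod M2_scale M2_mult Yc CJ) Zc)"
      using umult[OF M2_MP_carrier Zc_in] umult[OF Yc_in CJ_in] by simp
    also have "\<dots> = b" using prod_CJ u0 unfolding CJ_def by simp
    finally have uU: "u UNIV = b" .
    have uall: "u y = b" if "y \<in> carrier_q QB" for y
      using hom_bot_eq[OF Q hu that UNIV_B join_B_univ[OF that]] uU b_def by simp
    have vU: "v UNIV = b" using uCI uall[OF CI_in] by simp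
    have vall: "v z = b" if "z \<in> carrier_q QC" for z
      using hom_bot_eq[OF Q hv that UNIV_C join_C_univ[OF that]] vU b_def by simp
    have khom: "quantale_hom triv_q Q (\<lambda>_. b)"
      unfolding quantale_hom_def
    proof (intro conjI allI impI ballI)
      show "(\<lambda>_. b) ` carrier_q triv_q \<subseteq> carrier_q Q" using b_in by auto
    next
      fix S :: "unit set"
      show "b = join_q Q ((\<lambda>_. b) ` S)"
      proof (cases "S = {}")
        case True then show ?thesis by (simp add: b_def)
      next
        case False then have "(\<lambda>_. b) ` S = {b}" by auto
        then show ?thesis using join_single[OF Q b_in] by simp
      qed
    next
      fix x y show "b = mult_q Q b b" using bot_mult(1)[OF Q b_in] b_def by simp
    qed
    show ?thesis
    proof (intro exI[of _ "\<lambda>_. b"] conjI ballI allI impI)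
      show "quantale_hom triv_q Q (\<lambda>_. b)" by (rule khom)
    next
      fix y assume "y \<in> carrier_q QB" then show "b = u y" using uall by simp
    next
      fix z assume "z \<in> carrier_q QC" then show "b = v z" using vall by simp
    next
      fix k' p assume "quantale_hom triv_q Q k' \<and> (\<forall>y\<in>carrier_q QB. k' () = u y) \<and>
                   (\<forall>z\<in>carrier_q QC. k' () = v z)"
      then have "k' () = u UNIV" using UNIV_B by blast
      then show "k' p = b" using uU by simp
    qed
  qed
  show ?thesis
    unfolding is_trivial_q_def is_pushout_q_def
    apply (intro conjI triv_quantale)
    apply (simp add: triv_q_def)
    apply (simp add: quantale_hom_def triv_q_def)
    apply (simp add: quantale_hom_def triv_q_def)
    apply simp
    apply (intro allI impI)
    apply (elim conjE)
    apply (rule main)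
    apply assumption+
    done
qed

end
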